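(* Let $M_1$ and $M_2$ be matroids on disjoint finite ground sets $E_1$ and $E_2$, of ranks $r_1$ and $r_2$. Then $P(M_1\oplus M_2)$ has a nontrivial hyperplane split if and only if $P(M_1)$ or $P(M_2)$ has a nontrivial hyperplane split.
   Context: The direct sum $M_1\oplus M_2$ is the matroid on $E_1\cup E_2$ with bases $\{B_1\cup B_2: B_1\in\mathcal{B}(M_1), B_2\in\mathcal{B}(M_2)\}$. For a matroid $N$ on a finite set $E$, $P(N)=\mathrm{conv}\{\sum_{i\in B}e_i : B \text{ a base of } N\}\subset\mathbb{R}^E$, $e_i$ the standard basis vectors. A hyperplane split of $P(N)$ is an expression $P(N)=P(N_1)\cup P(N_2)$ with $N_1,N_2$ matroids on $E$ such that $P(N_1)\cap P(N_2)$ is a face of both $P(N_1)$ and $P(N_2)$; it is nontrivial if $P(N_1)\neq P(N)$ and $P(N_2)\neq P(N)$. *)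

theory Defs
  imports "HOL-Analysis.Analysis"
begin

text \<open>A matroid on a ground set E (a subset of a finite type 'a) is given by its family of bases.\<close>
definition matroid_on :: "'a set \<Rightarrow> 'a set set \<Rightarrow> bool" where
  "matroid_on E \<B> \<longleftrightarrow> finite E \<and> \<B> \<noteq> {} \<and> (\<forall>B\<in>\<B>. B \<subseteq> E) \<and>
     (\<forall>B1\<in>\<B>. \<forall>B2\<in>\<B>. \<forall>x\<in>B1 - B2. \<exists>y\<in>B2 - B1. insert y (B1 - {x}) \<in> \<B>)"

definition direct_sum_bases :: "'a set set \<Rightarrow> 'a set set \<Rightarrow> 'a set set" where
  "direct_sum_bases \<B>1 \<B>2 = {B1 \<union> B2 | B1 B2. B1 \<in> \<B>1 \<and> B2 \<in> \<B>2}"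

text \<open>Indicator vector sum of e_i over i in B; coordinates are indexed by the finite type 'a
  (coordinates outside the ground set are identically zero on the polytope).\<close>
definition ind_vec :: "'a::finite set \<Rightarrow> real ^ 'a" where
  "ind_vec B = (\<chi> i. if i \<in> B then 1 else 0)"

definition base_polytope :: "'a::finite set set \<Rightarrow> (real ^ 'a) set" where
  "base_polytope \<B> = convex hull (ind_vec ` \<B>)"

definition has_nontrivial_hyperplane_split :: "'a::finite set \<Rightarrow> 'a set set \<Rightarrow> bool" where
  "has_nontrivial_hyperplane_split E \<B> \<longleftrightarrow>
     (\<exists>\<B>1 \<B>2. matroid_on E \<B>1 \<and> matroid_on E \<B>2 \<and>
        base_polytope \<B> = base_polytope \<B>1 \<union> base_polytope \<B>2 \<and>
        (base_polytope \<B>1 \<inter> base_polytope \<B>2) face_of base_polytope \<B>1 \<and>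
        (base_polytope \<B>1 \<inter> base_polytope \<B>2) face_of base_polytope \<B>2 \<and>
        base_polytope \<B>1 \<noteq> base_polytope \<B> \<and> base_polytope \<B>2 \<noteq> base_polytope \<B>)"

end

theory Submission
  imports Defs
begin


definition supp :: "'a::finite set \<Rightarrow> (real^'a) set" where
  "supp E = {x. \<forall>i. i \<notin> E \<longrightarrow> x $ i = 0}"

lemma supp_add: "x \<in> supp E \<Longrightarrow> y \<in> supp E \<Longrightarrow> x + y \<in> supp E"
  by (simp add: supp_def)
lemma supp_scale: "x \<in> supp E \<Longrightarrow> c *\<^sub>R x \<in> supp E"
  by (simp add: supp_def)
lemma convex_supp: "convex (supp E)"
  unfolding convex_def supp_def by simp

lemma decomp:
  assumes "x \<in> supp E" "x' \<in> supp E" "y \<in> supp F" "y' \<in> supp F" "E \<inter> F = {}"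
    "x + y = x' + y'"
  shows "x = x' \<and> y = y'"
proof -
  have "x $ i = x' $ i \<and> y $ i = y' $ i" for i
  proof -
    have "(x + y) $ i = (x' + y') $ i" using assms(6) by simp
    then show ?thesis using assms(1-5) unfolding supp_def
      by (cases "i \<in> E"; cases "i \<in> F") auto
  qed
  then show ?thesis by (simp add: vec_eq_iff)
qed

lemma msum_mem:
  assumes "S \<subseteq> supp E" "T \<subseteq> supp F" "x \<in> supp E" "y \<in> supp F" "E \<inter> F = {}"
  shows "x + y \<in> S + T \<longleftrightarrow> x \<in> S \<and> y \<in> T"
proof
  assume "x + y \<in> S + T"
  then obtain s t where "s \<in> S" "t \<in> T" "x + y = s + t" by (auto elim: set_plus_elim)
  with decomp[of x E s y F t] assms show "x \<in> S \<and> y \<in> T" by auto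
qed auto

lemma msum_Int:
  assumes "S \<subseteq> supp E" "T \<subseteq> supp F" "T' \<subseteq> supp F" "E \<inter> F = {}"
  shows "(S + T) \<inter> (S + T') = S + (T \<inter> T')"
proof
  show "(S + T) \<inter> (S + T') \<subseteq> S + (T \<inter> T')"
  proof
    fix z assume "z \<in> (S + T) \<inter> (S + T')"
    then obtain s t s' t' where "s \<in> S" "t \<in> T" "s' \<in> S" "t' \<in> T'" "z = s + t" "z = s' + t'"
      by (auto elim!: set_plus_elim)
    with decomp[of s E s' t F t'] assms show "z \<in> S + (T \<inter> T')" by auto
  qed
qed (auto simp: set_plus_def)

lemma msum_sub:
  assumes "S \<subseteq> supp E" "T \<subseteq> supp F" "S' \<subseteq> supp E" "T' \<subseteq> supp F" "E \<inter> F = {}"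
    "S + T \<subseteq> S' + T'" "T \<noteq> {}"
  shows "S \<subseteq> S'"
proof
  fix x assume "x \<in> S"
  obtain y where "y \<in> T" using assms(7) by auto
  have "x + y \<in> S' + T'" using assms(6) \<open>x \<in> S\<close> \<open>y \<in> T\<close> by auto
  then show "x \<in> S'" using msum_mem[OF assms(3,4), of x y] assms \<open>x \<in> S\<close> \<open>y \<in> T\<close> by auto
qed

lemma face_msum:
  assumes FS: "F face_of S" and "S \<subseteq> supp E" "T \<subseteq> supp G" "E \<inter> G = {}" "convex T"
  shows "F + T face_of S + T"
  unfolding face_of_def
proof (intro conjI ballI impI)
  have FsS: "F \<subseteq> S" using FS face_of_imp_subset by blast
  then show "F + T \<subseteq> S + T" by (auto simp: set_plus_def)
  show "convex (F + T)" using FS face_of_imp_convex assms(5) convex_set_plus by blast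
  fix a b x assume a: "a \<in> S + T" and b: "b \<in> S + T" and x: "x \<in> F + T" and seg: "x \<in> open_segment a b"
  obtain a1 a2 where a12: "a1 \<in> S" "a2 \<in> T" "a = a1 + a2" using a by (auto elim: set_plus_elim)
  obtain b1 b2 where b12: "b1 \<in> S" "b2 \<in> T" "b = b1 + b2" using b by (auto elim: set_plus_elim)
  obtain f t where ft: "f \<in> F" "t \<in> T" "x = f + t" using x by (auto elim: set_plus_elim)
  obtain u where u: "0 < u" "u < 1" "x = (1 - u) *\<^sub>R a + u *\<^sub>R b" using seg by (auto simp: in_segment)
  have "f + t = ((1 - u) *\<^sub>R a1 + u *\<^sub>R b1) + ((1 - u) *\<^sub>R a2 + u *\<^sub>R b2)"
    using u(3) ft(3) a12(3) b12(3) by (simp add: algebra_simps)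
  moreover have "f \<in> supp E" using ft FsS assms(2) by auto
  moreover have "t \<in> supp G" using ft assms(3) by auto
  moreover have "(1 - u) *\<^sub>R a1 + u *\<^sub>R b1 \<in> supp E"
    using a12 b12 assms(2) by (intro supp_add supp_scale) auto
  moreover have "(1 - u) *\<^sub>R a2 + u *\<^sub>R b2 \<in> supp G"
    using a12 b12 assms(3) by (intro supp_add supp_scale) auto
  ultimately have f: "f = (1 - u) *\<^sub>R a1 + u *\<^sub>R b1" using decomp assms(4) by blast
  have ab: "a1 \<in> F \<and> b1 \<in> F"
  proof (cases "a1 = b1")
    case True
    then have "f = a1" using f by (simp add: algebra_simps)
    then show ?thesis using True ft by auto
  next
    case False
    then have "f \<in> open_segment a1 b1" using f u by (auto simp: in_segment)
    then show ?thesis using face_ofD[OF FS] a12 b12 ft by blast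
  qed
  show "a \<in> F + T" using ab a12 by auto
  show "b \<in> F + T" using ab b12 by auto
qed

lemma face_msum_rev:
  assumes FS: "S + G face_of S + T" and "S \<noteq> {}" "S \<subseteq> supp E" "T \<subseteq> supp F" "E \<inter> F = {}"
    "G \<subseteq> T"
  shows "G face_of T"
  unfolding face_of_def
proof (intro conjI ballI impI)
  obtain s where s: "s \<in> S" using assms(2) by auto
  have sE: "s \<in> supp E" using s assms(3) by auto
  have GF: "G \<subseteq> supp F" using assms(4,6) by auto
  show "G \<subseteq> T" by fact
  show "convex G" unfolding convex_alt
  proof (intro ballI allI impI)
    fix g1 g2 and u :: real assume g: "g1 \<in> G" "g2 \<in> G" and u: "0 \<le> u \<and> u \<le> 1"
    have "s + g1 \<in> S + G" "s + g2 \<in> S + G" using s g by auto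
    then have "(1 - u) *\<^sub>R (s + g1) + u *\<^sub>R (s + g2) \<in> S + G"
      using face_of_imp_convex[OF FS] u unfolding convex_alt by blast
    moreover have "(1 - u) *\<^sub>R (s + g1) + u *\<^sub>R (s + g2) = s + ((1 - u) *\<^sub>R g1 + u *\<^sub>R g2)"
      by (simp add: algebra_simps)
    moreover have "(1 - u) *\<^sub>R g1 + u *\<^sub>R g2 \<in> supp F"
      using g GF by (intro supp_add supp_scale) auto
    ultimately show "(1 - u) *\<^sub>R g1 + u *\<^sub>R g2 \<in> G"
      using msum_mem[OF assms(3) GF sE _ assms(5)] s by auto
  qed
  fix a b x assume a: "a \<in> T" and b: "b \<in> T" and x: "x \<in> G" and seg: "x \<in> open_segment a b"
  obtain u where u: "0 < u" "u < 1" "x = (1 - u) *\<^sub>R a + u *\<^sub>R b" "a \<noteq> b"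
    using seg by (auto simp: in_segment)
  have "s + x \<in> open_segment (s + a) (s + b)"
    unfolding in_segment using u by (intro conjI exI[of _ u]) (auto simp: algebra_simps)
  then have sab: "s + a \<in> S + G \<and> s + b \<in> S + G"
    using face_ofD[OF FS] s a b x by blast
  show "a \<in> G"
    using sab msum_mem[OF assms(3) GF sE _ assms(5)] s a b assms(4) by auto
  show "b \<in> G"
    using sab msum_mem[OF assms(3) GF sE _ assms(5)] s a b assms(4) by auto
qed




lemma ind_vec_union: "A \<inter> B = {} \<Longrightarrow> ind_vec (A \<union> B) = ind_vec A + ind_vec B"
  by (auto simp: ind_vec_def vec_eq_iff)

lemma ind_vec_inj: "ind_vec A = ind_vec B \<Longrightarrow> A = B"
  by (auto simp: ind_vec_def vec_eq_iff split: if_splits)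

lemma poly_supp: "\<forall>B\<in>\<B>. B \<subseteq> E \<Longrightarrow> base_polytope \<B> \<subseteq> supp E"
  unfolding base_polytope_def
proof (rule hull_minimal[where S=convex, OF _ convex_supp])
  assume "\<forall>B\<in>\<B>. B \<subseteq> E"
  then show "ind_vec ` \<B> \<subseteq> supp E" by (fastforce simp: supp_def ind_vec_def)
qed

lemma poly_ne: "\<B> \<noteq> {} \<Longrightarrow> base_polytope \<B> \<noteq> {}"
  unfolding base_polytope_def by auto

lemma poly_mono: "\<A> \<subseteq> \<B> \<Longrightarrow> base_polytope \<A> \<subseteq> base_polytope \<B>"
  unfolding base_polytope_def by (intro hull_mono image_mono)

lemma poly_sum:
  assumes "\<forall>B\<in>\<B>1. B \<subseteq> E1" "\<forall>B\<in>\<B>2. B \<subseteq> E2" "E1 \<inter> E2 = {}"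
  shows "base_polytope (direct_sum_bases \<B>1 \<B>2) = base_polytope \<B>1 + base_polytope \<B>2"
proof -
  have "ind_vec ` direct_sum_bases \<B>1 \<B>2 = ind_vec ` \<B>1 + ind_vec ` \<B>2"
  proof -
    have h: "ind_vec (B1 \<union> B2) = ind_vec B1 + ind_vec B2" if "B1 \<in> \<B>1" "B2 \<in> \<B>2" for B1 B2
      using that assms by (intro ind_vec_union) blast
    show ?thesis
      unfolding direct_sum_bases_def set_plus_def
    proof (intro equalityI subsetI)
      fix z assume "z \<in> ind_vec ` {B1 \<union> B2 |B1 B2. B1 \<in> \<B>1 \<and> B2 \<in> \<B>2}"
      then obtain B1 B2 where "B1 \<in> \<B>1" "B2 \<in> \<B>2" "z = ind_vec (B1 \<union> B2)" by auto
      then show "z \<in> {c. \<exists>a\<in>ind_vec ` \<B>1. \<exists>b\<in>ind_vec ` \<B>2. c = a + b}" using h by auto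
    next
      fix z assume "z \<in> {c. \<exists>a\<in>ind_vec ` \<B>1. \<exists>b\<in>ind_vec ` \<B>2. c = a + b}"
      then obtain B1 B2 where "B1 \<in> \<B>1" "B2 \<in> \<B>2" "z = ind_vec B1 + ind_vec B2" by auto
      then show "z \<in> ind_vec ` {B1 \<union> B2 |B1 B2. B1 \<in> \<B>1 \<and> B2 \<in> \<B>2}" using h
        by (intro image_eqI[of _ _ "B1 \<union> B2"]) auto
    qed
  qed
  then show ?thesis unfolding base_polytope_def by (simp add: convex_hull_set_plus)
qed

definition cube :: "(real^'a::finite) set" where "cube = {x. \<forall>i. 0 \<le> x $ i \<and> x $ i \<le> 1}"

lemma convex_cube: "convex cube"
  unfolding convex_def
proof (intro ballI allI impI)
  fix x y :: "real^'a" and u v :: real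
  assume xc: "x \<in> cube" and yc: "y \<in> cube" and uv: "0 \<le> u" "0 \<le> v" "u + v = 1"
  have x: "\<forall>i. 0 \<le> x $ i \<and> x $ i \<le> 1" and y: "\<forall>i. 0 \<le> y $ i \<and> y $ i \<le> 1"
    using xc yc by (auto simp: cube_def)
  have "0 \<le> u * x $ i + v * y $ i \<and> u * x $ i + v * y $ i \<le> 1" for i
  proof
  show "0 \<le> u * x $ i + v * y $ i" using x y uv by simp
  have "u * x $ i + v * y $ i \<le> u * 1 + v * 1"
    using x y uv by (intro add_mono mult_left_mono) auto
  then show "u * x $ i + v * y $ i \<le> 1" using uv by simp
  qed
  then show "u *\<^sub>R x + v *\<^sub>R y \<in> cube" by (simp add: cube_def)
qed

lemma vertex:
  assumes "ind_vec B \<in> base_polytope \<B>"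
  shows "B \<in> \<B>"
proof -
  let ?H = "convex hull (ind_vec ` \<B>)"
  have Hc: "?H \<subseteq> cube"
    by (rule hull_minimal[where S=convex, OF _ convex_cube]) (auto simp: cube_def ind_vec_def)
  have "ind_vec B extreme_point_of ?H"
    unfolding extreme_point_of_def
  proof (intro conjI ballI)
    show "ind_vec B \<in> ?H" using assms base_polytope_def by auto
    fix a b assume a: "a \<in> ?H" and b: "b \<in> ?H"
    show "ind_vec B \<notin> open_segment a b"
    proof
      assume "ind_vec B \<in> open_segment a b"
      then obtain u where u: "0 < u" "u < 1" "ind_vec B = (1 - u) *\<^sub>R a + u *\<^sub>R b" "a \<noteq> b"
        by (auto simp: in_segment)
      have "a $ i = b $ i" for i
      proof -
        have ai: "0 \<le> a $ i" "a $ i \<le> 1" and bi: "0 \<le> b $ i" "b $ i \<le> 1"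
          using a b Hc by (auto simp: cube_def)
        have e: "(ind_vec B) $ i = (1 - u) * a $ i + u * b $ i" using u(3) by simp
        show ?thesis
        proof (cases "i \<in> B")
          case True
          then have "(1 - u) * a $ i + u * b $ i = 1" using e by (simp add: ind_vec_def)
          moreover have "(1 - u) * a $ i \<le> (1 - u)" using ai u by (simp add: mult_left_le)
          moreover have "u * b $ i \<le> u" using bi u by (simp add: mult_left_le)
          moreover have "(1 - u) * a $ i < (1 - u) \<or> a $ i = 1" using ai u by auto
          moreover have "u * b $ i < u \<or> b $ i = 1" using bi u by auto
          ultimately show ?thesis by linarith
        next
          case False
          then have "(1 - u) * a $ i + u * b $ i = 0" using e by (simp add: ind_vec_def)
          moreover have "0 \<le> (1 - u) * a $ i" using ai u by simp
          moreover have "0 \<le> u * b $ i" using bi u by simp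
          moreover have "0 < (1 - u) * a $ i \<or> a $ i = 0" using ai u by auto
          moreover have "0 < u * b $ i \<or> b $ i = 0" using bi u by auto
          ultimately show ?thesis by linarith
        qed
      qed
      then show False using u(4) by (simp add: vec_eq_iff)
    qed
  qed
  then have "ind_vec B \<in> ind_vec ` \<B>" by (rule extreme_point_of_convex_hull)
  then show ?thesis using ind_vec_inj by auto
qed




lemma matroid_fin: "matroid_on E \<B> \<Longrightarrow> B \<in> \<B> \<Longrightarrow> finite B"
  unfolding matroid_on_def by (meson finite_subset)

lemma bases_card_aux:
  assumes M: "matroid_on E \<B>"
  shows "B1 \<in> \<B> \<Longrightarrow> B2 \<in> \<B> \<Longrightarrow> card (B1 - B2) = n \<Longrightarrow> card B1 = card B2"
proof (induction n arbitrary: B1)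
  case 0
  have fin: "finite B1" "finite B2" using M 0 matroid_fin by auto
  then have "B1 \<subseteq> B2" using 0 by auto
  moreover have "B2 \<subseteq> B1"
  proof
    fix x assume "x \<in> B2"
    show "x \<in> B1"
    proof (rule ccontr)
      assume "x \<notin> B1"
      then obtain y where "y \<in> B1 - B2" using M 0 \<open>x \<in> B2\<close> unfolding matroid_on_def by blast
      then show False using \<open>B1 \<subseteq> B2\<close> by auto
    qed
  qed
  ultimately show ?case by simp
next
  case (Suc n)
  have fin: "finite B1" "finite B2" using M Suc matroid_fin by auto
  then obtain x where x: "x \<in> B1 - B2" using Suc by (metis card.empty ex_in_conv nat.simps(3))
  then obtain y where y: "y \<in> B2 - B1" "insert y (B1 - {x}) \<in> \<B>" using M Suc unfolding matroid_on_def by blast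
  let ?B = "insert y (B1 - {x})"
  have "?B - B2 = (B1 - B2) - {x}" using x y by auto
  then have "card (?B - B2) = n" using Suc x fin by simp
  then have "card ?B = card B2" using Suc y by blast
  moreover have "card ?B = Suc (card (B1 - {x}))" using y fin by (intro card_insert_disjoint) auto
  moreover have "Suc (card (B1 - {x})) = card B1" using x fin by (intro card_Suc_Diff1) auto
  ultimately show ?case by simp
qed

lemma bases_card: "matroid_on E \<B> \<Longrightarrow> B1 \<in> \<B> \<Longrightarrow> B2 \<in> \<B> \<Longrightarrow> card B1 = card B2"
  using bases_card_aux by blast

lemma direct_sum_matroid:
  assumes M1: "matroid_on E1 \<B>1" and M2: "matroid_on E2 \<B>2" and D: "E1 \<inter> E2 = {}"
  shows "matroid_on (E1 \<union> E2) (direct_sum_bases \<B>1 \<B>2)"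
  unfolding matroid_on_def
proof (intro conjI ballI)
  show "finite (E1 \<union> E2)" using M1 M2 by (simp add: matroid_on_def)
  show "direct_sum_bases \<B>1 \<B>2 \<noteq> {}" using M1 M2 by (auto simp: matroid_on_def direct_sum_bases_def)
  fix B assume "B \<in> direct_sum_bases \<B>1 \<B>2"
  then show "B \<subseteq> E1 \<union> E2" using M1 M2 by (auto simp: matroid_on_def direct_sum_bases_def)
next
  fix B B' x assume B: "B \<in> direct_sum_bases \<B>1 \<B>2" and B': "B' \<in> direct_sum_bases \<B>1 \<B>2"
    and x: "x \<in> B - B'"
  obtain A1 A2 where A: "A1 \<in> \<B>1" "A2 \<in> \<B>2" "B = A1 \<union> A2" using B by (auto simp: direct_sum_bases_def)
  obtain C1 C2 where C: "C1 \<in> \<B>1" "C2 \<in> \<B>2" "B' = C1 \<union> C2" using B' by (auto simp: direct_sum_bases_def)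
  have s: "A1 \<subseteq> E1" "C1 \<subseteq> E1" "A2 \<subseteq> E2" "C2 \<subseteq> E2" using A C M1 M2 by (auto simp: matroid_on_def)
  show "\<exists>y\<in>B' - B. insert y (B - {x}) \<in> direct_sum_bases \<B>1 \<B>2"
  proof (cases "x \<in> A1")
    case True
    then have "x \<in> A1 - C1" using x C by auto
    then obtain y where y: "y \<in> C1 - A1" "insert y (A1 - {x}) \<in> \<B>1"
      using M1 A C unfolding matroid_on_def by blast
    have "x \<notin> A2" using True s D by blast
    then have eq: "insert y (B - {x}) = insert y (A1 - {x}) \<union> A2" using A(3) by blast
    have "insert y (A1 - {x}) \<union> A2 \<in> direct_sum_bases \<B>1 \<B>2"
      using y A unfolding direct_sum_bases_def by blast
    then have "insert y (B - {x}) \<in> direct_sum_bases \<B>1 \<B>2" using eq by (simp only:)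
    moreover have "y \<in> B' - B" using y s D A C by auto
    ultimately show ?thesis by blast
  next
    case False
    then have "x \<in> A2 - C2" using x C A by auto
    then obtain y where y: "y \<in> C2 - A2" "insert y (A2 - {x}) \<in> \<B>2"
      using M2 A C unfolding matroid_on_def by blast
    have eq: "insert y (B - {x}) = A1 \<union> insert y (A2 - {x})" using A(3) False by blast
    have "A1 \<union> insert y (A2 - {x}) \<in> direct_sum_bases \<B>1 \<B>2"
      using y A unfolding direct_sum_bases_def by blast
    then have "insert y (B - {x}) \<in> direct_sum_bases \<B>1 \<B>2" using eq by (simp only:)
    moreover have "y \<in> B' - B" using y s D A C by auto
    ultimately show ?thesis by blast
  qed
qed

lemma card_split:
  assumes "finite B" "B \<subseteq> E1 \<union> E2" "E1 \<inter> E2 = {}"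
  shows "card B = card (B \<inter> E1) + card (B \<inter> E2)"
proof -
  have eq: "B \<inter> E1 \<union> B \<inter> E2 = B" using assms by auto
  have "card (B \<inter> E1 \<union> B \<inter> E2) = card (B \<inter> E1) + card (B \<inter> E2)"
    by (rule card_Un_disjoint) (use assms in auto)
  then show ?thesis using eq by simp
qed

lemma combo_aux:
  assumes M: "matroid_on (E1 \<union> E2) N" and D: "E1 \<inter> E2 = {}" and K: "\<forall>B\<in>N. card (B \<inter> E1) = k"
  shows "B \<in> N \<Longrightarrow> B' \<in> N \<Longrightarrow> card (B \<inter> E2 - B') = n \<Longrightarrow> (B \<inter> E1) \<union> (B' \<inter> E2) \<in> N"
proof (induction n arbitrary: B)
  case 0
  have sub: "B \<subseteq> E1 \<union> E2" "B' \<subseteq> E1 \<union> E2" using M 0 by (auto simp: matroid_on_def)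
  have fin: "finite B" "finite B'" using M 0 matroid_fin by auto
  have "B \<inter> E2 \<subseteq> B' \<inter> E2" using 0 fin by auto
  moreover have "card (B \<inter> E2) = card (B' \<inter> E2)"
  proof -
    have "card B = card (B \<inter> E1) + card (B \<inter> E2)"
      using sub fin D by (intro card_split) auto
    moreover have "card B' = card (B' \<inter> E1) + card (B' \<inter> E2)"
      using sub fin D by (intro card_split) auto
    moreover have "card B = card B'" using bases_card M 0 by blast
    ultimately show ?thesis using K 0 by simp
  qed
  ultimately have "B \<inter> E2 = B' \<inter> E2" using fin by (simp add: card_subset_eq)
  then have "(B \<inter> E1) \<union> (B' \<inter> E2) = B" using sub by auto
  then show ?case using 0 by simp
next
  case (Suc n)
  have sub: "B \<subseteq> E1 \<union> E2" "B' \<subseteq> E1 \<union> E2" using M Suc by (auto simp: matroid_on_def)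
  have fin: "finite B" "finite B'" using M Suc matroid_fin by auto
  then obtain x where x: "x \<in> B \<inter> E2 - B'" using Suc by (metis card.empty ex_in_conv nat.simps(3))
  then obtain y where y: "y \<in> B' - B" "insert y (B - {x}) \<in> N"
    using M Suc unfolding matroid_on_def by blast
  let ?B = "insert y (B - {x})"
  have yE2: "y \<in> E2"
  proof (rule ccontr)
    assume "y \<notin> E2"
    then have yE1: "y \<in> E1" using y sub by auto
    have "?B \<inter> E1 = insert y (B \<inter> E1)" using x yE1 D by auto
    then have "card (?B \<inter> E1) = Suc (card (B \<inter> E1))" using y fin by simp
    then show False using K y Suc by auto
  qed
  have e1: "?B \<inter> E1 = B \<inter> E1" using x yE2 D by auto
  have "?B \<inter> E2 - B' = (B \<inter> E2 - B') - {x}" using x y yE2 by auto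
  then have "card (?B \<inter> E2 - B') = n" using Suc x fin by simp
  then have "(?B \<inter> E1) \<union> (B' \<inter> E2) \<in> N" using Suc y by blast
  then show ?case using e1 by simp
qed

lemma combo:
  assumes "matroid_on (E1 \<union> E2) N" "E1 \<inter> E2 = {}" "\<forall>B\<in>N. card (B \<inter> E1) = k" "B \<in> N" "B' \<in> N"
  shows "(B \<inter> E1) \<union> (B' \<inter> E2) \<in> N"
  using combo_aux[OF assms(1-3)] assms(4,5) by blast

lemma restr_matroid:
  assumes M: "matroid_on (E1 \<union> E2) N" and D: "E1 \<inter> E2 = {}"
    and C: "\<And>B B'. B \<in> N \<Longrightarrow> B' \<in> N \<Longrightarrow> (B \<inter> E1) \<union> (B' \<inter> E2) \<in> N"
  shows "matroid_on E1 ((\<lambda>B. B \<inter> E1) ` N)"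
  unfolding matroid_on_def
proof (intro conjI ballI)
  show "finite E1" using M by (simp add: matroid_on_def)
  show "(\<lambda>B. B \<inter> E1) ` N \<noteq> {}" using M by (simp add: matroid_on_def)
  fix B assume "B \<in> (\<lambda>B. B \<inter> E1) ` N" then show "B \<subseteq> E1" by auto
next
  fix C C' x assume "C \<in> (\<lambda>B. B \<inter> E1) ` N" "C' \<in> (\<lambda>B. B \<inter> E1) ` N" and x: "x \<in> C - C'"
  then obtain B B' where B: "B \<in> N" "C = B \<inter> E1" and B': "B' \<in> N" "C' = B' \<inter> E1" by auto
  have sub: "B \<subseteq> E1 \<union> E2" "B' \<subseteq> E1 \<union> E2" using M B B' by (auto simp: matroid_on_def)
  let ?B2 = "C' \<union> (B \<inter> E2)"
  have B2: "?B2 \<in> N" using C[OF B'(1) B(1)] B' by simp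
  have "x \<in> B - ?B2" using x B D by auto
  then obtain y where y: "y \<in> ?B2 - B" "insert y (B - {x}) \<in> N"
    using M B(1) B2 unfolding matroid_on_def by blast
  have yC: "y \<in> C' - C" using y B by auto
  then have "y \<in> E1" using B' by auto
  then have "insert y (B - {x}) \<inter> E1 = insert y (C - {x})" using B by auto
  then have "insert y (C - {x}) \<in> (\<lambda>B. B \<inter> E1) ` N" using y by (metis image_eqI)
  then show "\<exists>y\<in>C' - C. insert y (C - {x}) \<in> (\<lambda>B. B \<inter> E1) ` N" using yC by blast
qed

lemma split_bases:
  assumes M: "matroid_on (E1 \<union> E2) N" and D: "E1 \<inter> E2 = {}"
    and C: "\<And>B B'. B \<in> N \<Longrightarrow> B' \<in> N \<Longrightarrow> (B \<inter> E1) \<union> (B' \<inter> E2) \<in> N"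
  shows "N = direct_sum_bases ((\<lambda>B. B \<inter> E1) ` N) ((\<lambda>B. B \<inter> E2) ` N)"
proof (intro equalityI subsetI)
  fix B assume B: "B \<in> N"
  then have "B = (B \<inter> E1) \<union> (B \<inter> E2)" using M by (auto simp: matroid_on_def)
  then show "B \<in> direct_sum_bases ((\<lambda>B. B \<inter> E1) ` N) ((\<lambda>B. B \<inter> E2) ` N)"
    using B unfolding direct_sum_bases_def by blast
next
  fix B assume "B \<in> direct_sum_bases ((\<lambda>B. B \<inter> E1) ` N) ((\<lambda>B. B \<inter> E2) ` N)"
  then obtain B1 B2 where "B1 \<in> N" "B2 \<in> N" "B = (B1 \<inter> E1) \<union> (B2 \<inter> E2)"
    unfolding direct_sum_bases_def by blast
  then show "B \<in> N" using C by simp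
qed




lemma half:
  assumes "S1 \<subseteq> supp E" "S2 \<subseteq> supp F" "E \<inter> F = {}" "S1 \<noteq> {}" "X2 \<subseteq> S2" "Y2 \<subseteq> S2"
    and eq: "S1 + S2 = (S1 + X2) \<union> (S1 + Y2)"
    and fX: "(S1 + X2) \<inter> (S1 + Y2) face_of S1 + X2"
    and fY: "(S1 + X2) \<inter> (S1 + Y2) face_of S1 + Y2"
    and nX: "S1 + X2 \<noteq> S1 + S2" and nY: "S1 + Y2 \<noteq> S1 + S2"
  shows "S2 = X2 \<union> Y2 \<and> X2 \<inter> Y2 face_of X2 \<and> X2 \<inter> Y2 face_of Y2 \<and> X2 \<noteq> S2 \<and> Y2 \<noteq> S2"
proof (intro conjI)
  have X2s: "X2 \<subseteq> supp F" "Y2 \<subseteq> supp F" using assms by auto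
  obtain s where s: "s \<in> S1" using assms(4) by auto
  have sE: "s \<in> supp E" using s assms(1) by auto
  show "S2 = X2 \<union> Y2"
  proof
    show "S2 \<subseteq> X2 \<union> Y2"
    proof
      fix y assume y: "y \<in> S2"
      then have "s + y \<in> (S1 + X2) \<union> (S1 + Y2)" using eq s by auto
      moreover have "y \<in> supp F" using y assms(2) by auto
      ultimately show "y \<in> X2 \<union> Y2"
        using msum_mem[OF assms(1) X2s(1) sE _ assms(3)] msum_mem[OF assms(1) X2s(2) sE _ assms(3)]
        by auto
    qed
  qed (use assms in auto)
  have I: "(S1 + X2) \<inter> (S1 + Y2) = S1 + (X2 \<inter> Y2)" using msum_Int[OF assms(1) X2s assms(3)] .
  show "X2 \<inter> Y2 face_of X2"
    using face_msum_rev[of S1 "X2 \<inter> Y2" X2, OF _ assms(4,1) X2s(1) assms(3)] fX I by auto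
  show "X2 \<inter> Y2 face_of Y2"
    using face_msum_rev[of S1 "X2 \<inter> Y2" Y2, OF _ assms(4,1) X2s(2) assms(3)] fY I by auto
  show "X2 \<noteq> S2" using nX by auto
  show "Y2 \<noteq> S2" using nY by auto
qed

lemma split_main:
  assumes s1: "S1 \<subseteq> supp E1" "X1 \<subseteq> S1" "Y1 \<subseteq> S1"
    and s2: "S2 \<subseteq> supp E2" "X2 \<subseteq> S2" "Y2 \<subseteq> S2"
    and D: "E1 \<inter> E2 = {}" and ne: "S1 \<noteq> {}" "S2 \<noteq> {}"
    and eq: "S1 + S2 = (X1 + X2) \<union> (Y1 + Y2)"
    and fX: "(X1 + X2) \<inter> (Y1 + Y2) face_of X1 + X2"
    and fY: "(X1 + X2) \<inter> (Y1 + Y2) face_of Y1 + Y2"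
    and nX: "X1 + X2 \<noteq> S1 + S2" and nY: "Y1 + Y2 \<noteq> S1 + S2"
  shows "(S1 = X1 \<union> Y1 \<and> X1 \<inter> Y1 face_of X1 \<and> X1 \<inter> Y1 face_of Y1 \<and> X1 \<noteq> S1 \<and> Y1 \<noteq> S1) \<or>
         (S2 = X2 \<union> Y2 \<and> X2 \<inter> Y2 face_of X2 \<and> X2 \<inter> Y2 face_of Y2 \<and> X2 \<noteq> S2 \<and> Y2 \<noteq> S2)"
proof -
  have sp1: "X1 \<subseteq> supp E1" "Y1 \<subseteq> supp E1" using s1 by auto
  have sp2: "X2 \<subseteq> supp E2" "Y2 \<subseteq> supp E2" using s2 by auto
  have c: "X1 = S1 \<or> Y2 = S2" if X: "X1 \<subseteq> S1" "Y1 \<subseteq> S1" "X2 \<subseteq> S2" "Y2 \<subseteq> S2"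
    and eq': "S1 + S2 = (X1 + X2) \<union> (Y1 + Y2)"
    for X1 Y1 X2 Y2
  proof (rule ccontr)
    assume "\<not> (X1 = S1 \<or> Y2 = S2)"
    then obtain p q where p: "p \<in> S1" "p \<notin> X1" and q: "q \<in> S2" "q \<notin> Y2" using X by blast
    have pE: "p \<in> supp E1" and qE: "q \<in> supp E2" using p q s1 s2 by auto
    have "p + q \<in> (X1 + X2) \<union> (Y1 + Y2)" using eq' p q by auto
    then show False
      using msum_mem[of X1 E1 X2 E2 p q] msum_mem[of Y1 E1 Y2 E2 p q] X s1 s2 pE qE D p q by blast
  qed
  have c1: "X1 = S1 \<or> Y2 = S2" using c[OF s1(2,3) s2(2,3) eq] .
  have c2: "Y1 = S1 \<or> X2 = S2" using c[OF s1(3,2) s2(3,2)] eq by (simp add: Un_commute)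
  show ?thesis
  proof (cases "X1 = S1")
    case True
    then have "Y1 = S1" using c2 nX by auto
    have "S2 = X2 \<union> Y2 \<and> X2 \<inter> Y2 face_of X2 \<and> X2 \<inter> Y2 face_of Y2 \<and> X2 \<noteq> S2 \<and> Y2 \<noteq> S2"
    proof (rule half[OF s1(1) s2(1) D ne(1) s2(2,3)])
      show "S1 + S2 = S1 + X2 \<union> (S1 + Y2)" using eq True \<open>Y1 = S1\<close> by simp
      show "(S1 + X2) \<inter> (S1 + Y2) face_of S1 + X2" using fX True \<open>Y1 = S1\<close> by simp
      show "(S1 + X2) \<inter> (S1 + Y2) face_of S1 + Y2" using fY True \<open>Y1 = S1\<close> by simp
      show "S1 + X2 \<noteq> S1 + S2" using nX True by simp
      show "S1 + Y2 \<noteq> S1 + S2" using nY \<open>Y1 = S1\<close> by simp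
    qed
    then show ?thesis by blast
  next
    case False
    then have Y2: "Y2 = S2" using c1 by auto
    then have X2: "X2 = S2" using c2 nY by auto
    have "S1 = X1 \<union> Y1 \<and> X1 \<inter> Y1 face_of X1 \<and> X1 \<inter> Y1 face_of Y1 \<and> X1 \<noteq> S1 \<and> Y1 \<noteq> S1"
    proof (rule half[OF s2(1) s1(1) _ ne(2) s1(2,3)])
      show "E2 \<inter> E1 = {}" using D by auto
      show "S2 + S1 = S2 + X1 \<union> (S2 + Y1)" using eq X2 Y2 by (metis add.commute)
      show "(S2 + X1) \<inter> (S2 + Y1) face_of S2 + X1" using fX X2 Y2 by (metis add.commute)
      show "(S2 + X1) \<inter> (S2 + Y1) face_of S2 + Y1" using fY X2 Y2 by (metis add.commute)
      show "S2 + X1 \<noteq> S2 + S1" using nX X2 by (metis add.commute)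
      show "S2 + Y1 \<noteq> S2 + S1" using nY Y2 by (metis add.commute)
    qed
    then show ?thesis by blast
  qed
qed




lemma plus_Un_left: "(A \<union> B) + C = (A + C) \<union> (B + (C :: (real^'a::finite) set))"
  by (auto simp: set_plus_def)

lemma msub: "matroid_on E \<B> \<Longrightarrow> \<forall>B\<in>\<B>. B \<subseteq> E"
  unfolding matroid_on_def by blast
lemma mne: "matroid_on E \<B> \<Longrightarrow> \<B> \<noteq> {}"
  unfolding matroid_on_def by blast

lemma lift:
  assumes M1: "matroid_on E1 \<B>1" and M2: "matroid_on E2 \<B>2" and D: "E1 \<inter> E2 = {}"
    and H: "has_nontrivial_hyperplane_split E1 \<B>1"
  shows "has_nontrivial_hyperplane_split (E1 \<union> E2) (direct_sum_bases \<B>1 \<B>2)"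
proof -
  obtain N1 N2 where N: "matroid_on E1 N1" "matroid_on E1 N2"
    and eq: "base_polytope \<B>1 = base_polytope N1 \<union> base_polytope N2"
    and f1: "base_polytope N1 \<inter> base_polytope N2 face_of base_polytope N1"
    and f2: "base_polytope N1 \<inter> base_polytope N2 face_of base_polytope N2"
    and n1: "base_polytope N1 \<noteq> base_polytope \<B>1" and n2: "base_polytope N2 \<noteq> base_polytope \<B>1"
    using H unfolding has_nontrivial_hyperplane_split_def by blast
  have sub: "\<forall>B\<in>N1. B \<subseteq> E1" "\<forall>B\<in>N2. B \<subseteq> E1" "\<forall>B\<in>\<B>1. B \<subseteq> E1" "\<forall>B\<in>\<B>2. B \<subseteq> E2"
    using N M1 M2 by (simp_all add: msub)
  let ?P1 = "base_polytope N1" and ?P2 = "base_polytope N2" and ?Q = "base_polytope \<B>2"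
    and ?S = "base_polytope \<B>1"
  have sp: "?P1 \<subseteq> supp E1" "?P2 \<subseteq> supp E1" "?Q \<subseteq> supp E2" "?S \<subseteq> supp E1"
    using poly_supp[OF sub(1)] poly_supp[OF sub(2)] poly_supp[OF sub(4)] poly_supp[OF sub(3)] by auto
  have Qne: "?Q \<noteq> {}" using mne[OF M2] by (rule poly_ne)
  have ps: "base_polytope (direct_sum_bases N1 \<B>2) = ?P1 + ?Q"
    "base_polytope (direct_sum_bases N2 \<B>2) = ?P2 + ?Q"
    "base_polytope (direct_sum_bases \<B>1 \<B>2) = ?S + ?Q"
    using poly_sum[OF sub(1) sub(4) D] poly_sum[OF sub(2) sub(4) D] poly_sum[OF sub(3) sub(4) D] by auto
  have I: "(?P1 + ?Q) \<inter> (?P2 + ?Q) = (?P1 \<inter> ?P2) + ?Q"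
  proof -
    have D': "E2 \<inter> E1 = {}" using D by blast
    show ?thesis using msum_Int[OF sp(3) sp(1) sp(2) D'] by (simp only: add.commute)
  qed
  have cQ: "convex ?Q" unfolding base_polytope_def by simp
  have spI: "?P1 \<inter> ?P2 \<subseteq> supp E1" using sp by auto
  show ?thesis unfolding has_nontrivial_hyperplane_split_def
  proof (intro exI conjI)
    show "matroid_on (E1 \<union> E2) (direct_sum_bases N1 \<B>2)" by (rule direct_sum_matroid[OF N(1) M2 D])
    show "matroid_on (E1 \<union> E2) (direct_sum_bases N2 \<B>2)" by (rule direct_sum_matroid[OF N(2) M2 D])
    show "base_polytope (direct_sum_bases \<B>1 \<B>2) =
      base_polytope (direct_sum_bases N1 \<B>2) \<union> base_polytope (direct_sum_bases N2 \<B>2)"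
      unfolding ps eq plus_Un_left ..
    show "base_polytope (direct_sum_bases N1 \<B>2) \<inter> base_polytope (direct_sum_bases N2 \<B>2)
        face_of base_polytope (direct_sum_bases N1 \<B>2)"
      unfolding ps I by (rule face_msum[OF f1 sp(1) sp(3) D cQ])
    show "base_polytope (direct_sum_bases N1 \<B>2) \<inter> base_polytope (direct_sum_bases N2 \<B>2)
        face_of base_polytope (direct_sum_bases N2 \<B>2)"
      unfolding ps I by (rule face_msum[OF f2 sp(2) sp(3) D cQ])
    show "base_polytope (direct_sum_bases N1 \<B>2) \<noteq> base_polytope (direct_sum_bases \<B>1 \<B>2)"
    proof
      assume "base_polytope (direct_sum_bases N1 \<B>2) = base_polytope (direct_sum_bases \<B>1 \<B>2)"
      then have "?S + ?Q \<subseteq> ?P1 + ?Q" using ps by simp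
      then have "?S \<subseteq> ?P1" using msum_sub[OF sp(4) sp(3) sp(1) sp(3) D _ Qne] by blast
      then show False using n1 eq by auto
    qed
    show "base_polytope (direct_sum_bases N2 \<B>2) \<noteq> base_polytope (direct_sum_bases \<B>1 \<B>2)"
    proof
      assume "base_polytope (direct_sum_bases N2 \<B>2) = base_polytope (direct_sum_bases \<B>1 \<B>2)"
      then have "?S + ?Q \<subseteq> ?P2 + ?Q" using ps by simp
      then have "?S \<subseteq> ?P2" using msum_sub[OF sp(4) sp(3) sp(2) sp(3) D _ Qne] by blast
      then show False using n2 eq by auto
    qed
  qed
qed

lemma dsb_comm: "direct_sum_bases A B = direct_sum_bases B A"
  unfolding direct_sum_bases_def by (auto simp: Un_commute)

lemma dsb_parts:
  assumes "matroid_on E1 \<B>1" "matroid_on E2 \<B>2" "E1 \<inter> E2 = {}" "B \<in> direct_sum_bases \<B>1 \<B>2"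
  shows "B \<inter> E1 \<in> \<B>1" "B \<inter> E2 \<in> \<B>2"
proof -
  obtain B1 B2 where "B1 \<in> \<B>1" "B2 \<in> \<B>2" "B = B1 \<union> B2" using assms(4) by (auto simp: direct_sum_bases_def)
  moreover have "B1 \<subseteq> E1" "B2 \<subseteq> E2" using msub[OF assms(1)] msub[OF assms(2)] calculation by auto
  ultimately have "B \<inter> E1 = B1" "B \<inter> E2 = B2" using assms(3) by auto
  then show "B \<inter> E1 \<in> \<B>1" "B \<inter> E2 \<in> \<B>2" using \<open>B1 \<in> \<B>1\<close> \<open>B2 \<in> \<B>2\<close> by auto
qed

lemma decomp_sub:
  assumes M: "matroid_on (E1 \<union> E2) N" and D: "E1 \<inter> E2 = {}"
    and M1: "matroid_on E1 \<B>1" and M2: "matroid_on E2 \<B>2" and S: "N \<subseteq> direct_sum_bases \<B>1 \<B>2"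
  shows "\<exists>A1 A2. matroid_on E1 A1 \<and> matroid_on E2 A2 \<and> A1 \<subseteq> \<B>1 \<and> A2 \<subseteq> \<B>2 \<and>
     N = direct_sum_bases A1 A2"
proof -
  obtain b0 where b0: "b0 \<in> \<B>1" using mne[OF M1] by auto
  have K: "\<forall>B\<in>N. card (B \<inter> E1) = card b0"
    using dsb_parts(1)[OF M1 M2 D] S bases_card[OF M1 _ b0] by blast
  have C: "(B \<inter> E1) \<union> (B' \<inter> E2) \<in> N" if "B \<in> N" "B' \<in> N" for B B'
    using combo[OF M D K that] .
  have C': "(B \<inter> E2) \<union> (B' \<inter> E1) \<in> N" if "B \<in> N" "B' \<in> N" for B B'
    using C[OF that(2,1)] by (simp add: Un_commute)
  have M': "matroid_on (E2 \<union> E1) N" using M by (simp add: Un_commute)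
  have D': "E2 \<inter> E1 = {}" using D by auto
  show ?thesis
  proof (intro exI conjI)
    show "matroid_on E1 ((\<lambda>B. B \<inter> E1) ` N)" using restr_matroid[OF M D C] by blast
    show "matroid_on E2 ((\<lambda>B. B \<inter> E2) ` N)" using restr_matroid[OF M' D' C'] by blast
    show "(\<lambda>B. B \<inter> E1) ` N \<subseteq> \<B>1" using dsb_parts(1)[OF M1 M2 D] S by blast
    show "(\<lambda>B. B \<inter> E2) ` N \<subseteq> \<B>2" using dsb_parts(2)[OF M1 M2 D] S by blast
    show "N = direct_sum_bases ((\<lambda>B. B \<inter> E1) ` N) ((\<lambda>B. B \<inter> E2) ` N)"
      using split_bases[OF M D C] by blast
  qed
qed

lemma sub_of_poly:
  assumes "base_polytope N \<subseteq> base_polytope \<B>"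
  shows "N \<subseteq> \<B>"
proof
  fix B assume "B \<in> N"
  then have "ind_vec B \<in> base_polytope N" unfolding base_polytope_def by (simp add: hull_inc)
  then show "B \<in> \<B>" using assms vertex by blast
qed

lemma down:
  assumes M1: "matroid_on E1 \<B>1" and M2: "matroid_on E2 \<B>2" and D: "E1 \<inter> E2 = {}"
    and H: "has_nontrivial_hyperplane_split (E1 \<union> E2) (direct_sum_bases \<B>1 \<B>2)"
  shows "has_nontrivial_hyperplane_split E1 \<B>1 \<or> has_nontrivial_hyperplane_split E2 \<B>2"
proof -
  let ?D = "direct_sum_bases \<B>1 \<B>2"
  obtain N1 N2 where N: "matroid_on (E1 \<union> E2) N1" "matroid_on (E1 \<union> E2) N2"
    and eq: "base_polytope ?D = base_polytope N1 \<union> base_polytope N2"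
    and f1: "base_polytope N1 \<inter> base_polytope N2 face_of base_polytope N1"
    and f2: "base_polytope N1 \<inter> base_polytope N2 face_of base_polytope N2"
    and n1: "base_polytope N1 \<noteq> base_polytope ?D" and n2: "base_polytope N2 \<noteq> base_polytope ?D"
    using H unfolding has_nontrivial_hyperplane_split_def by blast
  have "N1 \<subseteq> ?D" using eq by (intro sub_of_poly) blast
  moreover have "N2 \<subseteq> ?D" using eq by (intro sub_of_poly) blast
  ultimately have S1: "N1 \<subseteq> ?D" and S2: "N2 \<subseteq> ?D" by auto
  obtain A1 A2 where Ah: "matroid_on E1 A1 \<and> matroid_on E2 A2 \<and> A1 \<subseteq> \<B>1 \<and> A2 \<subseteq> \<B>2 \<and>
      N1 = direct_sum_bases A1 A2"
    using decomp_sub[OF N(1) D M1 M2 S1] by (elim exE) (rule that)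
  then have A: "matroid_on E1 A1" "matroid_on E2 A2" "A1 \<subseteq> \<B>1" "A2 \<subseteq> \<B>2"
      "N1 = direct_sum_bases A1 A2" by (simp_all only:)
  obtain C1 C2 where Ch: "matroid_on E1 C1 \<and> matroid_on E2 C2 \<and> C1 \<subseteq> \<B>1 \<and> C2 \<subseteq> \<B>2 \<and>
      N2 = direct_sum_bases C1 C2"
    using decomp_sub[OF N(2) D M1 M2 S2] by (elim exE) (rule that)
  then have C: "matroid_on E1 C1" "matroid_on E2 C2" "C1 \<subseteq> \<B>1" "C2 \<subseteq> \<B>2"
      "N2 = direct_sum_bases C1 C2" by (simp_all only:)
  have sub: "\<forall>B\<in>A1. B \<subseteq> E1" "\<forall>B\<in>C1. B \<subseteq> E1" "\<forall>B\<in>\<B>1. B \<subseteq> E1"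
    "\<forall>B\<in>A2. B \<subseteq> E2" "\<forall>B\<in>C2. B \<subseteq> E2" "\<forall>B\<in>\<B>2. B \<subseteq> E2"
    using A(1,2) C(1,2) M1 M2 by (simp_all add: msub)
  have ps: "base_polytope N1 = base_polytope A1 + base_polytope A2"
    "base_polytope N2 = base_polytope C1 + base_polytope C2"
    "base_polytope ?D = base_polytope \<B>1 + base_polytope \<B>2"
    unfolding A(5) C(5)
    using poly_sum[OF sub(1) sub(4) D] poly_sum[OF sub(2) sub(5) D] poly_sum[OF sub(3) sub(6) D] by auto
  have "(base_polytope \<B>1 = base_polytope A1 \<union> base_polytope C1 \<and>
          base_polytope A1 \<inter> base_polytope C1 face_of base_polytope A1 \<and>
          base_polytope A1 \<inter> base_polytope C1 face_of base_polytope C1 \<and>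
          base_polytope A1 \<noteq> base_polytope \<B>1 \<and> base_polytope C1 \<noteq> base_polytope \<B>1) \<or>
        (base_polytope \<B>2 = base_polytope A2 \<union> base_polytope C2 \<and>
          base_polytope A2 \<inter> base_polytope C2 face_of base_polytope A2 \<and>
          base_polytope A2 \<inter> base_polytope C2 face_of base_polytope C2 \<and>
          base_polytope A2 \<noteq> base_polytope \<B>2 \<and> base_polytope C2 \<noteq> base_polytope \<B>2)"
  proof (rule split_main)
    show "base_polytope \<B>1 \<subseteq> supp E1" by (rule poly_supp[OF sub(3)])
    show "base_polytope \<B>2 \<subseteq> supp E2" by (rule poly_supp[OF sub(6)])
    show "base_polytope A1 \<subseteq> base_polytope \<B>1" by (rule poly_mono[OF A(3)])
    show "base_polytope C1 \<subseteq> base_polytope \<B>1" by (rule poly_mono[OF C(3)])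
    show "base_polytope A2 \<subseteq> base_polytope \<B>2" by (rule poly_mono[OF A(4)])
    show "base_polytope C2 \<subseteq> base_polytope \<B>2" by (rule poly_mono[OF C(4)])
    show "E1 \<inter> E2 = {}" by fact
    show "base_polytope \<B>1 \<noteq> {}" "base_polytope \<B>2 \<noteq> {}"
      using mne[OF M1] mne[OF M2] poly_ne by auto
    show "base_polytope \<B>1 + base_polytope \<B>2 =
      (base_polytope A1 + base_polytope A2) \<union> (base_polytope C1 + base_polytope C2)"
      unfolding ps[symmetric] by (rule eq)
    show "(base_polytope A1 + base_polytope A2) \<inter> (base_polytope C1 + base_polytope C2)
      face_of base_polytope A1 + base_polytope A2"
      unfolding ps[symmetric] by (rule f1)
    show "(base_polytope A1 + base_polytope A2) \<inter> (base_polytope C1 + base_polytope C2)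
      face_of base_polytope C1 + base_polytope C2"
      unfolding ps[symmetric] by (rule f2)
    show "base_polytope A1 + base_polytope A2 \<noteq> base_polytope \<B>1 + base_polytope \<B>2"
      unfolding ps[symmetric] by (rule n1)
    show "base_polytope C1 + base_polytope C2 \<noteq> base_polytope \<B>1 + base_polytope \<B>2"
      unfolding ps[symmetric] by (rule n2)
  qed
  then show ?thesis
  proof (elim disjE)
    assume h: "base_polytope \<B>1 = base_polytope A1 \<union> base_polytope C1 \<and>
          base_polytope A1 \<inter> base_polytope C1 face_of base_polytope A1 \<and>
          base_polytope A1 \<inter> base_polytope C1 face_of base_polytope C1 \<and>
          base_polytope A1 \<noteq> base_polytope \<B>1 \<and> base_polytope C1 \<noteq> base_polytope \<B>1"
    have "has_nontrivial_hyperplane_split E1 \<B>1"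
      unfolding has_nontrivial_hyperplane_split_def
      by (rule exI[of _ A1], rule exI[of _ C1]) (use h A(1) C(1) in blast)
    then show ?thesis ..
  next
    assume h: "base_polytope \<B>2 = base_polytope A2 \<union> base_polytope C2 \<and>
          base_polytope A2 \<inter> base_polytope C2 face_of base_polytope A2 \<and>
          base_polytope A2 \<inter> base_polytope C2 face_of base_polytope C2 \<and>
          base_polytope A2 \<noteq> base_polytope \<B>2 \<and> base_polytope C2 \<noteq> base_polytope \<B>2"
    have "has_nontrivial_hyperplane_split E2 \<B>2"
      unfolding has_nontrivial_hyperplane_split_def
      by (rule exI[of _ A2], rule exI[of _ C2]) (use h A(2) C(2) in blast)
    then show ?thesis ..
  qed
qed

theorem theorem2:
  fixes E1 E2 :: "'a::finite set" and \<B>1 \<B>2 :: "'a set set"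
  assumes "matroid_on E1 \<B>1" and "matroid_on E2 \<B>2" and "E1 \<inter> E2 = {}"
  shows "has_nontrivial_hyperplane_split (E1 \<union> E2) (direct_sum_bases \<B>1 \<B>2) \<longleftrightarrow>
         has_nontrivial_hyperplane_split E1 \<B>1 \<or> has_nontrivial_hyperplane_split E2 \<B>2"
proof
  assume "has_nontrivial_hyperplane_split (E1 \<union> E2) (direct_sum_bases \<B>1 \<B>2)"
  then show "has_nontrivial_hyperplane_split E1 \<B>1 \<or> has_nontrivial_hyperplane_split E2 \<B>2"
    by (rule down[OF assms])
next
  assume "has_nontrivial_hyperplane_split E1 \<B>1 \<or> has_nontrivial_hyperplane_split E2 \<B>2"
  then show "has_nontrivial_hyperplane_split (E1 \<union> E2) (direct_sum_bases \<B>1 \<B>2)"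
  proof
    assume "has_nontrivial_hyperplane_split E1 \<B>1"
    then show ?thesis by (rule lift[OF assms])
  next
    assume "has_nontrivial_hyperplane_split E2 \<B>2"
    moreover have "E2 \<inter> E1 = {}" using assms(3) by blast
    ultimately have "has_nontrivial_hyperplane_split (E2 \<union> E1) (direct_sum_bases \<B>2 \<B>1)"
      using lift[OF assms(2,1)] by blast
    moreover have "direct_sum_bases \<B>2 \<B>1 = direct_sum_bases \<B>1 \<B>2" by (rule dsb_comm)
    moreover have "E2 \<union> E1 = E1 \<union> E2" by (rule Un_commute)
    ultimately show ?thesis by simp
  qed
qed


end
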